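(* Let $A$ be a finite-dimensional associative algebra over $K=\mathbb{R}$ or $\mathbb{C}$ with unit $u$, and let $\{\cdot,\cdot\}$ be a quadratic Poisson bracket on $A$ compatible with its multiplication, with dual map $\delta\colon\mathrm{Symm}(A\otimes A)\to A\wedge A$. Then the map $\Delta\colon A\to A\wedge A$, $\Delta(x)=\delta(x\otimes u+u\otimes x)$, is a cocommutator making the Lie algebra $A_L$ into a Lie bialgebra.
   Context: $A_L$ denotes the Lie algebra on the vector space $A$ with bracket $[a,b]=ab-ba$. A quadratic Poisson bracket on $A$ is a Poisson bracket on $C^\infty(A)$ such that the bracket of two linear functions is a homogeneous quadratic function; it is encoded by $\delta^*\colon A^*\wedge A^*\to\mathrm{Sym}^2(A^* )$, $\delta^*(\xi\wedge\eta)=\{\xi,\eta\}$, and $\delta$ is its dual map (identifying $\mathrm{Symm}(A\otimes A)$, the symmetric tensors, with $(\mathrm{Sym}^2A^* )^*$ and $A\wedge A$, the skew-symmetric tensors in $A\otimes A$, with $(A^*\wedge A^* )^*$). Compatibility with the multiplication means that the multiplication map $A\times A\to A$ is a Poisson map when $A\times A$ carries the product Poisson structure. A Lie bialgebra structure on a Lie algebra $L$ is a linear map $\Delta\colon L\to L\wedge L$ which is a 1-cocycle with respect to the adjoint action and whose dual $\Delta^*\colon L^*\wedge L^*\to L^*$ is a Lie bracket. *)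

theory Defs
  imports Complex_Main
begin

text \<open>A finite-dimensional algebra A over K is represented as K^n,
  i.e. vectors \<open>'n \<Rightarrow> 'k\<close> for a finite index type \<open>'n\<close> (a basis e_1..e_n).
  Tensors in A \<otimes> A are \<open>'n \<Rightarrow> 'n \<Rightarrow> 'k\<close> (coefficients w.r.t. e_i \<otimes> e_j).
  Dual vectors (elements of A^*) are likewise \<open>'n \<Rightarrow> 'k\<close> (coefficients w.r.t. the
  dual basis x_1..x_n, i.e. the linear coordinate functions).\<close>

definition bvec :: "'n \<Rightarrow> 'n \<Rightarrow> 'k::comm_ring_1" where
  "bvec a = (\<lambda>i. if i = a then 1 else 0)"

definition amul :: "('n::finite \<Rightarrow> 'n \<Rightarrow> 'n \<Rightarrow> 'k::comm_ring_1) \<Rightarrow> ('n \<Rightarrow> 'k) \<Rightarrow> ('n \<Rightarrow> 'k) \<Rightarrow> ('n \<Rightarrow> 'k)" where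
  "amul c x y = (\<lambda>k. \<Sum>i\<in>UNIV. \<Sum>j\<in>UNIV. x i * y j * c i j k)"

definition unital_assoc_algebra :: "('n::finite \<Rightarrow> 'n \<Rightarrow> 'n \<Rightarrow> 'k::comm_ring_1) \<Rightarrow> ('n \<Rightarrow> 'k) \<Rightarrow> bool" where
  "unital_assoc_algebra c u \<longleftrightarrow>
     (\<forall>x y z. amul c (amul c x y) z = amul c x (amul c y z)) \<and>
     (\<forall>x. amul c u x = x \<and> amul c x u = x)"

definition commutator :: "('n::finite \<Rightarrow> 'n \<Rightarrow> 'n \<Rightarrow> 'k::comm_ring_1) \<Rightarrow> ('n \<Rightarrow> 'k) \<Rightarrow> ('n \<Rightarrow> 'k) \<Rightarrow> ('n \<Rightarrow> 'k)" where
  "commutator c x y = (\<lambda>k. amul c x y k - amul c y x k)"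

text \<open>A quadratic bracket is given by P: {x_i, x_j} = sum_{k,l} P i j k l x_k x_l,
  with P i j a symmetric tensor (an element of Sym^2(A^*)), i.e. P symmetric in k,l.
  \<open>qpi P a i j\<close> is the value of {x_i,x_j} at the point a (the Poisson bivector at a),
  \<open>dqpi P a i j m\<close> its partial derivative along x_m at a.\<close>
definition qpi :: "('n::finite \<Rightarrow> 'n \<Rightarrow> 'n \<Rightarrow> 'n \<Rightarrow> 'k::comm_ring_1) \<Rightarrow> ('n \<Rightarrow> 'k) \<Rightarrow> 'n \<Rightarrow> 'n \<Rightarrow> 'k" where
  "qpi P a i j = (\<Sum>k\<in>UNIV. \<Sum>l\<in>UNIV. P i j k l * a k * a l)"

definition dqpi :: "('n::finite \<Rightarrow> 'n \<Rightarrow> 'n \<Rightarrow> 'n \<Rightarrow> 'k::comm_ring_1) \<Rightarrow> ('n \<Rightarrow> 'k) \<Rightarrow> 'n \<Rightarrow> 'n \<Rightarrow> 'n \<Rightarrow> 'k" where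
  "dqpi P a i j m = (\<Sum>l\<in>UNIV. (P i j m l + P i j l m) * a l)"

text \<open>A Poisson bracket on smooth functions is determined by its bivector
  pi_{ij} = {x_i,x_j}, and the Jacobi identity holds for all functions iff
  sum_m (pi_{im} d_m pi_{jk} + cyclic) = 0 identically.\<close>
definition quadratic_poisson :: "('n::finite \<Rightarrow> 'n \<Rightarrow> 'n \<Rightarrow> 'n \<Rightarrow> 'k::comm_ring_1) \<Rightarrow> bool" where
  "quadratic_poisson P \<longleftrightarrow>
     (\<forall>i j k l. P i j k l = P i j l k) \<and>
     (\<forall>i j k l. P i j k l = - P j i k l) \<and>
     (\<forall>a i j k. (\<Sum>m\<in>UNIV. qpi P a i m * dqpi P a j k m
                         + qpi P a j m * dqpi P a k i m
                         + qpi P a k m * dqpi P a i j m) = 0)"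

text \<open>Compatibility: multiplication A \<times> A \<rightarrow> A is a Poisson map (product structure on A \<times> A).
  Pulling back x_k, x_l along m and using d_{a_i}(ab) = e_i b, d_{b_j}(ab) = a e_j.\<close>
definition poisson_compatible :: "('n::finite \<Rightarrow> 'n \<Rightarrow> 'n \<Rightarrow> 'k::comm_ring_1) \<Rightarrow> ('n \<Rightarrow> 'n \<Rightarrow> 'n \<Rightarrow> 'n \<Rightarrow> 'k) \<Rightarrow> bool" where
  "poisson_compatible c P \<longleftrightarrow>
     (\<forall>a b k l. qpi P (amul c a b) k l =
        (\<Sum>i\<in>UNIV. \<Sum>j\<in>UNIV. qpi P a i j * amul c (bvec i) b k * amul c (bvec j) b l)
      + (\<Sum>i\<in>UNIV. \<Sum>j\<in>UNIV. qpi P b i j * amul c a (bvec i) k * amul c a (bvec j) l))"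

text \<open>The dual map delta : Symm(A \<otimes> A) \<rightarrow> A \<wedge> A of delta^*(x_i \<wedge> x_j) = {x_i,x_j},
  (pairings by full contraction of coefficients).\<close>
definition pdelta :: "('n::finite \<Rightarrow> 'n \<Rightarrow> 'n \<Rightarrow> 'n \<Rightarrow> 'k::comm_ring_1) \<Rightarrow> ('n \<Rightarrow> 'n \<Rightarrow> 'k) \<Rightarrow> ('n \<Rightarrow> 'n \<Rightarrow> 'k)" where
  "pdelta P T = (\<lambda>i j. \<Sum>k\<in>UNIV. \<Sum>l\<in>UNIV. P i j k l * T k l)"

definition cocomm :: "('n::finite \<Rightarrow> 'n \<Rightarrow> 'n \<Rightarrow> 'n \<Rightarrow> 'k::comm_ring_1) \<Rightarrow> ('n \<Rightarrow> 'k) \<Rightarrow> ('n \<Rightarrow> 'k) \<Rightarrow> ('n \<Rightarrow> 'n \<Rightarrow> 'k)" where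
  "cocomm P u x = pdelta P (\<lambda>k l. x k * u l + u k * x l)"

definition lie_bracket :: "(('n::finite \<Rightarrow> 'k::comm_ring_1) \<Rightarrow> ('n \<Rightarrow> 'k) \<Rightarrow> ('n \<Rightarrow> 'k)) \<Rightarrow> bool" where
  "lie_bracket B \<longleftrightarrow>
     (\<forall>x y z. B (\<lambda>i. x i + y i) z = (\<lambda>i. B x z i + B y z i)) \<and>
     (\<forall>x y z. B z (\<lambda>i. x i + y i) = (\<lambda>i. B z x i + B z y i)) \<and>
     (\<forall>s x y. B (\<lambda>i. s * x i) y = (\<lambda>i. s * B x y i)) \<and>
     (\<forall>s x y. B y (\<lambda>i. s * x i) = (\<lambda>i. s * B y x i)) \<and>
     (\<forall>x. B x x = (\<lambda>i. 0)) \<and>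
     (\<forall>x y z. (\<lambda>i. B x (B y z) i + B y (B z x) i + B z (B x y) i) = (\<lambda>i. 0))"

text \<open>Adjoint action of x on A \<otimes> A: x.(a \<otimes> b) = [x,a] \<otimes> b + a \<otimes> [x,b].\<close>
definition ad2 :: "(('n::finite \<Rightarrow> 'k::comm_ring_1) \<Rightarrow> ('n \<Rightarrow> 'k) \<Rightarrow> ('n \<Rightarrow> 'k)) \<Rightarrow> ('n \<Rightarrow> 'k) \<Rightarrow> ('n \<Rightarrow> 'n \<Rightarrow> 'k) \<Rightarrow> ('n \<Rightarrow> 'n \<Rightarrow> 'k)" where
  "ad2 B x T = (\<lambda>i j. (\<Sum>a\<in>UNIV. T a j * B x (bvec a) i) + (\<Sum>b\<in>UNIV. T i b * B x (bvec b) j))"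

text \<open>Dual map Delta^* : A^* \<wedge> A^* \<rightarrow> A^*, <Delta^*(xi,eta), x> = <xi \<otimes> eta, Delta x>.\<close>
definition dual_bracket :: "(('n::finite \<Rightarrow> 'k::comm_ring_1) \<Rightarrow> ('n \<Rightarrow> 'n \<Rightarrow> 'k)) \<Rightarrow> ('n \<Rightarrow> 'k) \<Rightarrow> ('n \<Rightarrow> 'k) \<Rightarrow> ('n \<Rightarrow> 'k)" where
  "dual_bracket D xi eta = (\<lambda>k. \<Sum>i\<in>UNIV. \<Sum>j\<in>UNIV. xi i * eta j * D (bvec k) i j)"

definition lie_bialgebra :: "(('n::finite \<Rightarrow> 'k::comm_ring_1) \<Rightarrow> ('n \<Rightarrow> 'k) \<Rightarrow> ('n \<Rightarrow> 'k)) \<Rightarrow> (('n \<Rightarrow> 'k) \<Rightarrow> ('n \<Rightarrow> 'n \<Rightarrow> 'k)) \<Rightarrow> bool" where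
  "lie_bialgebra B D \<longleftrightarrow>
     lie_bracket B \<and>
     (\<forall>x y. D (\<lambda>i. x i + y i) = (\<lambda>i j. D x i j + D y i j)) \<and>
     (\<forall>s x. D (\<lambda>i. s * x i) = (\<lambda>i j. s * D x i j)) \<and>
     (\<forall>x i j. D x i j = - D x j i) \<and>
     (\<forall>x y. D (B x y) = (\<lambda>i j. ad2 B x (D y) i j - ad2 B y (D x) i j)) \<and>
     lie_bracket (dual_bracket D)"

end

theory Submission imports Defs "HOL-Library.Function_Algebras" begin

definition Bf :: "('n::finite \<Rightarrow> 'n \<Rightarrow> 'n \<Rightarrow> 'n \<Rightarrow> 'k::comm_ring_1) \<Rightarrow> ('n \<Rightarrow> 'k) \<Rightarrow> ('n \<Rightarrow> 'k) \<Rightarrow> ('n \<Rightarrow> 'n \<Rightarrow> 'k)" where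
  "Bf P x y = (\<lambda>i j. \<Sum>k\<in>UNIV. \<Sum>l\<in>UNIV. P i j k l * x k * y l)"

definition RR :: "('n::finite \<Rightarrow> 'n \<Rightarrow> 'n \<Rightarrow> 'k::comm_ring_1) \<Rightarrow> ('n \<Rightarrow> 'n \<Rightarrow> 'k) \<Rightarrow> ('n \<Rightarrow> 'k) \<Rightarrow> ('n \<Rightarrow> 'k) \<Rightarrow> ('n \<Rightarrow> 'n \<Rightarrow> 'k)" where
  "RR c T b b' = (\<lambda>k l. \<Sum>i\<in>UNIV. \<Sum>j\<in>UNIV. T i j * amul c (bvec i) b k * amul c (bvec j) b' l)"

definition LL :: "('n::finite \<Rightarrow> 'n \<Rightarrow> 'n \<Rightarrow> 'k::comm_ring_1) \<Rightarrow> ('n \<Rightarrow> 'n \<Rightarrow> 'k) \<Rightarrow> ('n \<Rightarrow> 'k) \<Rightarrow> ('n \<Rightarrow> 'k) \<Rightarrow> ('n \<Rightarrow> 'n \<Rightarrow> 'k)" where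
  "LL c T a a' = (\<lambda>k l. \<Sum>i\<in>UNIV. \<Sum>j\<in>UNIV. T i j * amul c a (bvec i) k * amul c a' (bvec j) l)"

lemma amul_add1: "amul c (x + y) z = amul c x z + amul c y z"
  by (simp add: amul_def fun_eq_iff algebra_simps sum.distrib)
lemma amul_add2: "amul c z (x + y) = amul c z x + amul c z y"
  by (simp add: amul_def fun_eq_iff algebra_simps sum.distrib)
lemma amul_diff1: "amul c (x - y) z = amul c x z - amul c y z"
  by (simp add: amul_def fun_eq_iff algebra_simps sum_subtractf)
lemma amul_diff2: "amul c z (x - y) = amul c z x - amul c z y"
  by (simp add: amul_def fun_eq_iff algebra_simps sum_subtractf)

lemma Bf_add1: "Bf P (x + y) z = Bf P x z + Bf P y z"
  by (simp add: Bf_def fun_eq_iff algebra_simps sum.distrib)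
lemma Bf_add2: "Bf P z (x + y) = Bf P z x + Bf P z y"
  by (simp add: Bf_def fun_eq_iff algebra_simps sum.distrib)
lemma Bf_diff1: "Bf P (x - y) z = Bf P x z - Bf P y z"
  by (simp add: Bf_def fun_eq_iff algebra_simps sum_subtractf)
lemma Bf_diff2: "Bf P z (x - y) = Bf P z x - Bf P z y"
  by (simp add: Bf_def fun_eq_iff algebra_simps sum_subtractf)

lemma RR_add0: "RR c (S + T) b b' = RR c S b b' + RR c T b b'"
  by (simp add: RR_def fun_eq_iff algebra_simps sum.distrib)
lemma RR_diff0: "RR c (S - T) b b' = RR c S b b' - RR c T b b'"
  by (simp add: RR_def fun_eq_iff algebra_simps sum_subtractf)
lemma RR_add1: "RR c T (x + y) b' = RR c T x b' + RR c T y b'"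
  by (simp add: RR_def amul_add2 fun_eq_iff algebra_simps sum.distrib)
lemma RR_diff1: "RR c T (x - y) b' = RR c T x b' - RR c T y b'"
  by (simp add: RR_def amul_diff2 fun_eq_iff algebra_simps sum_subtractf)
lemma RR_add2: "RR c T b (x + y) = RR c T b x + RR c T b y"
  by (simp add: RR_def amul_add2 fun_eq_iff algebra_simps sum.distrib)
lemma RR_diff2: "RR c T b (x - y) = RR c T b x - RR c T b y"
  by (simp add: RR_def amul_diff2 fun_eq_iff algebra_simps sum_subtractf)

lemma LL_add0: "LL c (S + T) b b' = LL c S b b' + LL c T b b'"
  by (simp add: LL_def fun_eq_iff algebra_simps sum.distrib)
lemma LL_diff0: "LL c (S - T) b b' = LL c S b b' - LL c T b b'"
  by (simp add: LL_def fun_eq_iff algebra_simps sum_subtractf)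
lemma LL_add1: "LL c T (x + y) b' = LL c T x b' + LL c T y b'"
  by (simp add: LL_def amul_add1 fun_eq_iff algebra_simps sum.distrib)
lemma LL_diff1: "LL c T (x - y) b' = LL c T x b' - LL c T y b'"
  by (simp add: LL_def amul_diff1 fun_eq_iff algebra_simps sum_subtractf)
lemma LL_add2: "LL c T b (x + y) = LL c T b x + LL c T b y"
  by (simp add: LL_def amul_add1 fun_eq_iff algebra_simps sum.distrib)
lemma LL_diff2: "LL c T b (x - y) = LL c T b x - LL c T b y"
  by (simp add: LL_def amul_diff1 fun_eq_iff algebra_simps sum_subtractf)

lemmas lin = amul_add1 amul_add2 amul_diff1 amul_diff2 Bf_add1 Bf_add2 Bf_diff1 Bf_diff2
  RR_add0 RR_diff0 RR_add1 RR_diff1 RR_add2 RR_diff2 LL_add0 LL_diff0 LL_add1 LL_diff1 LL_add2 LL_diff2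

lemma qpi_Bf: "qpi P a = Bf P a a"
  by (simp add: qpi_def Bf_def fun_eq_iff)

lemma compat':
  assumes "poisson_compatible c P"
  shows "Bf P (amul c a b) (amul c a b) = RR c (Bf P a a) b b + LL c (Bf P b b) a a"
  using assms unfolding poisson_compatible_def
  by (simp add: fun_eq_iff RR_def LL_def qpi_Bf[symmetric])

lemma sum_bvec1: "(\<Sum>i\<in>UNIV. f i * bvec i (k::'n::finite)) = (f k :: 'k::comm_ring_1)"
proof -
  have "(\<Sum>i\<in>UNIV. f i * bvec i k) = (\<Sum>i\<in>UNIV. if k = i then f i else 0)"
    by (rule sum.cong) (auto simp: bvec_def)
  then show ?thesis by simp
qed
lemma sum_bvec2: "(\<Sum>i\<in>UNIV. bvec i (k::'n::finite) * f i) = (f k :: 'k::comm_ring_1)"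
  using sum_bvec1[of f k] by (simp add: mult.commute)

lemma sum_bvec_2: "(\<Sum>i\<in>UNIV. \<Sum>j\<in>UNIV. T i j * bvec i (x::'n::finite) * bvec j (y::'n)) = (T x y :: 'k::comm_ring_1)"
proof -
  have "(\<Sum>j\<in>UNIV. T i j * bvec i x * bvec j y) = T i y * bvec i x" for i
    using sum_bvec1[of "\<lambda>j. T i j * bvec i x" y] by (simp add: mult_ac)
  then show ?thesis by (simp add: sum_bvec1)
qed

lemma unit_l: "unital_assoc_algebra c u \<Longrightarrow> amul c u x = x"
  unfolding unital_assoc_algebra_def by blast
lemma unit_r: "unital_assoc_algebra c u \<Longrightarrow> amul c x u = x"
  unfolding unital_assoc_algebra_def by blast
lemma assoc: "unital_assoc_algebra c u \<Longrightarrow> amul c (amul c x y) z = amul c x (amul c y z)"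
  unfolding unital_assoc_algebra_def by blast

lemma RR_uu:
  assumes "unital_assoc_algebra c u"
  shows "RR c T u u = T"
  by (simp add: RR_def unit_r[OF assms] fun_eq_iff sum_bvec_2)

lemma LL_uu:
  assumes "unital_assoc_algebra c u"
  shows "LL c T u u = T"
  by (simp add: LL_def unit_l[OF assms] fun_eq_iff sum_bvec_2)

lemma four_zero:
  fixes f :: "'n \<Rightarrow> 'n \<Rightarrow> 'k::field_char_0"
  assumes "f + f + f + f = 0" shows "f = 0"
proof (rule ext, rule ext)
  fix i j
  have "f i j + f i j + f i j + f i j = 0" using assms by (simp add: fun_eq_iff)
  then have "4 * f i j = 0" by simp
  then show "f i j = 0 i j" by simp
qed

lemma Buu:
  assumes U: "unital_assoc_algebra c u" and C: "poisson_compatible c P"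
  shows "Bf P u u = (0 :: 'n::finite \<Rightarrow> 'n \<Rightarrow> 'k::field_char_0)"
proof -
  have "Bf P u u = Bf P u u + Bf P u u"
    using compat'[OF C, of u u] by (simp add: unit_l[OF U] RR_uu[OF U] LL_uu[OF U])
  then show ?thesis by simp
qed

lemma cocyc_key:
  fixes P :: "'n::finite \<Rightarrow> 'n \<Rightarrow> 'n \<Rightarrow> 'n \<Rightarrow> 'k::field_char_0"
  assumes U: "unital_assoc_algebra c u" and C: "poisson_compatible c P"
  shows "Bf P u (amul c x y) + Bf P (amul c x y) u + Bf P x y + Bf P y x
     = RR c (Bf P x u + Bf P u x) u y + RR c (Bf P x u + Bf P u x) y u
     + LL c (Bf P y u + Bf P u y) u x + LL c (Bf P y u + Bf P u y) x u"
    (is "?L = ?R")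
proof -
  let ?E = "\<lambda>a b. Bf P (amul c a b) (amul c a b) - (RR c (Bf P a a) b b + LL c (Bf P b b) a a)"
  have E: "\<And>a b. ?E a b = 0" using compat'[OF C] by simp
  have "(?L - ?R) + (?L - ?R) + (?L - ?R) + (?L - ?R) =
     ?E (u + x) (u + y) - ?E (u + x) (u - y) - ?E (u - x) (u + y) + ?E (u - x) (u - y)"
    by (simp add: lin unit_l[OF U] unit_r[OF U] RR_uu[OF U] LL_uu[OF U] Buu[OF U C] algebra_simps)
  then have "(?L - ?R) + (?L - ?R) + (?L - ?R) + (?L - ?R) = 0" by (simp only: E) simp
  then have "?L - ?R = 0" by (rule four_zero)
  then show ?thesis by simp
qed


lemma sum_bvec3: "(\<Sum>k\<in>UNIV. bvec m k * f k) = (f (m::'n::finite) :: 'k::comm_ring_1)"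
proof -
  have "(\<Sum>k\<in>UNIV. bvec m k * f k) = (\<Sum>k\<in>UNIV. if k = m then f k else 0)"
    by (rule sum.cong) (auto simp: bvec_def)
  then show ?thesis by simp
qed
lemma sum_bvec4: "(\<Sum>k\<in>UNIV. f k * bvec m k) = (f (m::'n::finite) :: 'k::comm_ring_1)"
  using sum_bvec3[of m f] by (simp add: mult.commute)

lemma sum_bvec_first: "(\<Sum>i\<in>UNIV. \<Sum>j\<in>UNIV. T i j * bvec i (k::'n::finite) * g j) = (\<Sum>j\<in>UNIV. T k j * (g j::'k::comm_ring_1))"
proof -
  have "(\<Sum>i\<in>UNIV. \<Sum>j\<in>UNIV. T i j * bvec i k * g j) = (\<Sum>j\<in>UNIV. \<Sum>i\<in>UNIV. (T i j * g j) * bvec i k)"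
    by (subst sum.swap) (simp add: mult_ac)
  also have "\<dots> = (\<Sum>j\<in>UNIV. T k j * g j)" by (simp only: sum_bvec1)
  finally show ?thesis .
qed

lemma sum_bvec_second: "(\<Sum>i\<in>UNIV. \<Sum>j\<in>UNIV. T i j * g i * bvec j (l::'n::finite)) = (\<Sum>i\<in>UNIV. T i l * (g i::'k::comm_ring_1))"
  by (rule sum.cong[OF refl]) (rule sum_bvec1)

lemma comm_eq: "commutator c x y = amul c x y - amul c y x"
  by (simp add: commutator_def fun_eq_iff)

lemma ad2_eq:
  assumes U: "unital_assoc_algebra c u"
  shows "ad2 (commutator c) x T = LL c T x u + LL c T u x - RR c T x u - RR c T u x"
proof -
  have a: "LL c T x u i j = (\<Sum>a\<in>UNIV. T a j * amul c x (bvec a) i)" for i j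
    unfolding LL_def by (simp add: unit_l[OF U] sum_bvec_second)
  have b: "LL c T u x i j = (\<Sum>b\<in>UNIV. T i b * amul c x (bvec b) j)" for i j
    unfolding LL_def by (simp add: unit_l[OF U] sum_bvec_first)
  have c: "RR c T x u i j = (\<Sum>a\<in>UNIV. T a j * amul c (bvec a) x i)" for i j
    unfolding RR_def by (simp add: unit_r[OF U] sum_bvec_second)
  have d: "RR c T u x i j = (\<Sum>b\<in>UNIV. T i b * amul c (bvec b) x j)" for i j
    unfolding RR_def by (simp add: unit_r[OF U] sum_bvec_first)
  show ?thesis
    by (simp add: fun_eq_iff ad2_def a b c d commutator_def algebra_simps sum_subtractf)
qed

lemma cocomm_Bf: "cocomm P u x = Bf P x u + Bf P u x"
  by (simp add: cocomm_def pdelta_def Bf_def fun_eq_iff algebra_simps sum.distrib)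

lemma cocycle:
  fixes P :: "'n::finite \<Rightarrow> 'n \<Rightarrow> 'n \<Rightarrow> 'n \<Rightarrow> 'k::field_char_0"
  assumes U: "unital_assoc_algebra c u" and C: "poisson_compatible c P"
  shows "cocomm P u (commutator c x y) = (\<lambda>i j. ad2 (commutator c) x (cocomm P u y) i j - ad2 (commutator c) y (cocomm P u x) i j)"
proof -
  note k1 = cocyc_key[OF U C, of x y] and k2 = cocyc_key[OF U C, of y x]
  have "(\<lambda>i j. ad2 (commutator c) x (cocomm P u y) i j - ad2 (commutator c) y (cocomm P u x) i j)
     = ad2 (commutator c) x (cocomm P u y) - ad2 (commutator c) y (cocomm P u x)"
    by (simp add: fun_eq_iff)
  also have "\<dots> = (RR c (Bf P x u + Bf P u x) u y + RR c (Bf P x u + Bf P u x) y u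
     + LL c (Bf P y u + Bf P u y) u x + LL c (Bf P y u + Bf P u y) x u)
     - (RR c (Bf P y u + Bf P u y) u x + RR c (Bf P y u + Bf P u y) x u
     + LL c (Bf P x u + Bf P u x) u y + LL c (Bf P x u + Bf P u x) y u)"
    by (simp add: ad2_eq[OF U] cocomm_Bf algebra_simps)
  also have "\<dots> = (Bf P u (amul c x y) + Bf P (amul c x y) u + Bf P x y + Bf P y x)
     - (Bf P u (amul c y x) + Bf P (amul c y x) u + Bf P y x + Bf P x y)"
    by (simp only: k1 k2)
  also have "\<dots> = cocomm P u (commutator c x y)"
    by (simp add: cocomm_Bf comm_eq lin algebra_simps)
  finally show ?thesis by simp
qed


lemma dqpi_add: "dqpi P (a + b) j k m = dqpi P a j k m + dqpi P b j k m"
  by (simp add: dqpi_def algebra_simps sum.distrib)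
lemma dqpi_diff: "dqpi P (a - b) j k m = dqpi P a j k m - dqpi P b j k m"
  by (simp add: dqpi_def algebra_simps sum_subtractf)

lemma Bf_bvec1: "Bf P (bvec m) y i j = (\<Sum>l\<in>UNIV. P i j m l * y l)"
proof -
  have "Bf P (bvec m) y i j = (\<Sum>k\<in>UNIV. bvec m k * (\<Sum>l\<in>UNIV. P i j k l * y l))"
    by (simp add: Bf_def sum_distrib_left mult_ac)
  then show ?thesis by (simp only: sum_bvec3)
qed
lemma Bf_bvec2: "Bf P y (bvec m) i j = (\<Sum>k\<in>UNIV. P i j k m * y k)"
proof -
  have "Bf P y (bvec m) i j = (\<Sum>k\<in>UNIV. \<Sum>l\<in>UNIV. (P i j k l * y k) * bvec m l)"
    by (simp add: Bf_def)
  then show ?thesis by (simp only: sum_bvec4)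
qed

lemma dqpi_cocomm: "dqpi P u j k m = cocomm P u (bvec m) j k"
  by (simp add: cocomm_Bf Bf_bvec1 Bf_bvec2 dqpi_def algebra_simps sum.distrib)

lemma struct_jacobi:
  fixes P :: "'n::finite \<Rightarrow> 'n \<Rightarrow> 'n \<Rightarrow> 'n \<Rightarrow> 'k::field_char_0"
  assumes U: "unital_assoc_algebra c u" and C: "poisson_compatible c P" and Q: "quadratic_poisson P"
  shows "(\<Sum>m\<in>UNIV. cocomm P u (bvec r) i m * cocomm P u (bvec m) j k
                 + cocomm P u (bvec r) j m * cocomm P u (bvec m) k i
                 + cocomm P u (bvec r) k m * cocomm P u (bvec m) i j) = 0"
proof -
  define v :: "'n \<Rightarrow> 'k" where "v = bvec r"
  define K where "K = cocomm P u v"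
  define W where "W = Bf P v v"
  have J: "\<And>a. (\<Sum>m\<in>UNIV. qpi P a i m * dqpi P a j k m
                         + qpi P a j m * dqpi P a k i m
                         + qpi P a k m * dqpi P a i j m) = 0"
    using Q unfolding quadratic_poisson_def by blast
  have e1: "qpi P (u + v) = K + W"
    by (simp add: qpi_Bf lin Buu[OF U C] K_def W_def cocomm_Bf algebra_simps)
  have e2: "qpi P (u - v) = W - K"
    by (simp add: qpi_Bf lin Buu[OF U C] K_def W_def cocomm_Bf algebra_simps)
  have e3: "qpi P v = W" by (simp add: qpi_Bf W_def)
  have d1: "\<And>a b m. dqpi P (u + v) a b m = cocomm P u (bvec m) a b + dqpi P v a b m"
    by (simp only: dqpi_add dqpi_cocomm[of P u])
  have d2: "\<And>a b m. dqpi P (u - v) a b m = cocomm P u (bvec m) a b - dqpi P v a b m"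
    by (simp only: dqpi_diff dqpi_cocomm[of P u])
  let ?f = "\<lambda>a m. qpi P a i m * dqpi P a j k m + qpi P a j m * dqpi P a k i m + qpi P a k m * dqpi P a i j m"
  let ?g = "\<lambda>m. K i m * cocomm P u (bvec m) j k + K j m * cocomm P u (bvec m) k i + K k m * cocomm P u (bvec m) i j"
  have "(\<Sum>m\<in>UNIV. 2 * ?g m) = (\<Sum>m\<in>UNIV. ?f (u + v) m - ?f (u - v) m - 2 * ?f v m)"
    by (rule sum.cong) (simp_all add: e1 e2 e3 d1 d2 algebra_simps)
  also have "\<dots> = (\<Sum>m\<in>UNIV. ?f (u + v) m) - (\<Sum>m\<in>UNIV. ?f (u - v) m) - 2 * (\<Sum>m\<in>UNIV. ?f v m)"
    by (simp only: sum_subtractf sum_distrib_left)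
  also have "\<dots> = 0"
    by (simp only: J) simp
  finally have "2 * (\<Sum>m\<in>UNIV. ?g m) = 0" by (simp add: sum_distrib_left)
  then show ?thesis by (simp add: K_def v_def)
qed


lemma tri:
  fixes x y z :: "'n::finite \<Rightarrow> 'k::comm_ring_1"
  shows "(\<Sum>a\<in>UNIV. \<Sum>m\<in>UNIV. x a * (\<lambda>m. \<Sum>b\<in>UNIV. \<Sum>c\<in>UNIV. y b * z c * F m b c) m * G a m)
     = (\<Sum>a\<in>UNIV. \<Sum>b\<in>UNIV. \<Sum>c\<in>UNIV. x a * y b * z c * (\<Sum>m\<in>UNIV. G a m * F m b c))"
proof (rule sum.cong[OF refl])
  fix a
  have "(\<Sum>m\<in>UNIV. x a * (\<lambda>m. \<Sum>b\<in>UNIV. \<Sum>c\<in>UNIV. y b * z c * F m b c) m * G a m)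
      = (\<Sum>m\<in>UNIV. \<Sum>b\<in>UNIV. \<Sum>c\<in>UNIV. x a * y b * z c * (G a m * F m b c))"
    by (simp add: sum_distrib_left sum_distrib_right mult_ac)
  also have "\<dots> = (\<Sum>b\<in>UNIV. \<Sum>m\<in>UNIV. \<Sum>c\<in>UNIV. x a * y b * z c * (G a m * F m b c))"
    by (rule sum.swap)
  also have "\<dots> = (\<Sum>b\<in>UNIV. \<Sum>c\<in>UNIV. \<Sum>m\<in>UNIV. x a * y b * z c * (G a m * F m b c))"
    by (rule sum.cong[OF refl], rule sum.swap)
  also have "\<dots> = (\<Sum>b\<in>UNIV. \<Sum>c\<in>UNIV. x a * y b * z c * (\<Sum>m\<in>UNIV. G a m * F m b c))"
    by (simp add: sum_distrib_left)
  finally show "(\<Sum>m\<in>UNIV. x a * (\<lambda>m. \<Sum>b\<in>UNIV. \<Sum>c\<in>UNIV. y b * z c * F m b c) m * G a m)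
     = (\<Sum>b\<in>UNIV. \<Sum>c\<in>UNIV. x a * y b * z c * (\<Sum>m\<in>UNIV. G a m * F m b c))" .
qed

lemma perm3: "(\<Sum>a\<in>(UNIV::'n::finite set). \<Sum>b\<in>(UNIV::'n set). \<Sum>c\<in>(UNIV::'n set). f a b c)
   = (\<Sum>c\<in>UNIV. \<Sum>a\<in>UNIV. \<Sum>b\<in>UNIV. (f a b c :: 'k::comm_ring_1))"
proof -
  have "(\<Sum>a\<in>(UNIV::'n set). \<Sum>b\<in>(UNIV::'n set). \<Sum>c\<in>(UNIV::'n set). f a b c)
      = (\<Sum>a\<in>UNIV. \<Sum>c\<in>UNIV. \<Sum>b\<in>UNIV. f a b c)"
    by (rule sum.cong[OF refl], rule sum.swap)
  also have "\<dots> = (\<Sum>c\<in>UNIV. \<Sum>a\<in>UNIV. \<Sum>b\<in>UNIV. f a b c)" by (rule sum.swap)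
  finally show ?thesis .
qed

lemma cocomm_skew:
  assumes Q: "quadratic_poisson P"
  shows "cocomm P u x i j = - cocomm P u x j i"
proof -
  have "\<And>k l. P i j k l = - P j i k l" using Q unfolding quadratic_poisson_def by blast
  then show ?thesis by (simp add: cocomm_def pdelta_def sum_negf[symmetric])
qed

lemma dual_lie:
  fixes P :: "'n::finite \<Rightarrow> 'n \<Rightarrow> 'n \<Rightarrow> 'n \<Rightarrow> 'k::field_char_0"
  assumes U: "unital_assoc_algebra c u" and C: "poisson_compatible c P" and Q: "quadratic_poisson P"
  shows "lie_bracket (dual_bracket (cocomm P u))"
proof -
  define K where "K = (\<lambda>r. cocomm P u (bvec r))"
  define B where "B = dual_bracket (cocomm P u)"
  have Bd: "B x y = (\<lambda>r. \<Sum>i\<in>UNIV. \<Sum>j\<in>UNIV. x i * y j * K r i j)" for x y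
    by (simp add: B_def K_def dual_bracket_def)
  have Ksk: "K r i j = - K r j i" for r i j unfolding K_def by (rule cocomm_skew[OF Q])
  have alt: "B x x = (\<lambda>i. 0)" for x
  proof
    fix r
    let ?S = "\<Sum>i\<in>UNIV. \<Sum>j\<in>UNIV. x i * x j * K r i j"
    have "?S = (\<Sum>j\<in>UNIV. \<Sum>i\<in>UNIV. x i * x j * K r i j)" by (rule sum.swap)
    also have "\<dots> = (\<Sum>j\<in>UNIV. \<Sum>i\<in>UNIV. - (x j * x i * K r j i))"
      by (intro sum.cong refl) (subst Ksk, simp add: mult_ac)
    also have "\<dots> = - ?S" by (simp add: sum_negf)
    finally have "?S = - ?S" .
    then have "?S = 0" by simp
    then show "B x x r = 0" by (simp add: Bd)
  qed
  have jac: "(\<lambda>r. B x (B y z) r + B y (B z x) r + B z (B x y) r) = (\<lambda>r. 0)" for x y z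
  proof
    fix r
    define T where "T = (\<lambda>a b c. \<Sum>m\<in>UNIV. K r a m * K m b c)"
    have t1: "B x (B y z) r = (\<Sum>i\<in>UNIV. \<Sum>j\<in>UNIV. \<Sum>k\<in>UNIV. x i * y j * z k * T i j k)"
      unfolding Bd T_def by (rule tri)
    have t2: "B y (B z x) r = (\<Sum>i\<in>UNIV. \<Sum>j\<in>UNIV. \<Sum>k\<in>UNIV. y j * z k * x i * T j k i)"
      unfolding Bd T_def by (subst tri, rule perm3)
    have t3: "B z (B x y) r = (\<Sum>i\<in>UNIV. \<Sum>j\<in>UNIV. \<Sum>k\<in>UNIV. z k * x i * y j * T k i j)"
      unfolding Bd T_def by (subst tri, subst perm3, rule perm3)
    have "B x (B y z) r + B y (B z x) r + B z (B x y) r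
       = (\<Sum>i\<in>UNIV. \<Sum>j\<in>UNIV. \<Sum>k\<in>UNIV. x i * y j * z k * (T i j k + T j k i + T k i j))"
      unfolding t1 t2 t3 by (simp add: sum.distrib[symmetric] algebra_simps)
    also have "\<dots> = 0"
    proof -
      have Tz: "T i j k + T j k i + T k i j = 0" for i j k
        unfolding T_def K_def using struct_jacobi[OF U C Q, of r i j k] by (simp only: sum.distrib)
      show ?thesis by (simp add: Tz)
    qed
    finally show "B x (B y z) r + B y (B z x) r + B z (B x y) r = 0" .
  qed
  show ?thesis
    unfolding B_def[symmetric] lie_bracket_def
  proof (intro conjI allI)
    fix x y z :: "'n \<Rightarrow> 'k"
    show "B (\<lambda>i. x i + y i) z = (\<lambda>i. B x z i + B y z i)"
      by (simp add: Bd algebra_simps sum.distrib)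
    show "B z (\<lambda>i. x i + y i) = (\<lambda>i. B z x i + B z y i)"
      by (simp add: Bd algebra_simps sum.distrib)
  next
    fix s :: 'k and x y :: "'n \<Rightarrow> 'k"
    show "B (\<lambda>i. s * x i) y = (\<lambda>i. s * B x y i)"
      by (simp add: Bd sum_distrib_left mult_ac)
    show "B y (\<lambda>i. s * x i) = (\<lambda>i. s * B y x i)"
      by (simp add: Bd sum_distrib_left mult_ac)
  qed (use alt jac in auto)
qed


lemma comm_lie:
  fixes c :: "'n::finite \<Rightarrow> 'n \<Rightarrow> 'n \<Rightarrow> 'k::comm_ring_1"
  assumes U: "unital_assoc_algebra c u"
  shows "lie_bracket (commutator c)"
  unfolding lie_bracket_def
proof (intro conjI allI)
  fix x y z :: "'n \<Rightarrow> 'k"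
  show "commutator c (\<lambda>i. x i + y i) z = (\<lambda>i. commutator c x z i + commutator c y z i)"
    by (simp add: commutator_def amul_def fun_eq_iff algebra_simps sum.distrib)
  show "commutator c z (\<lambda>i. x i + y i) = (\<lambda>i. commutator c z x i + commutator c z y i)"
    by (simp add: commutator_def amul_def fun_eq_iff algebra_simps sum.distrib)
  show "commutator c x x = (\<lambda>i. 0)" by (simp add: commutator_def)
  have "commutator c x (commutator c y z) + commutator c y (commutator c z x) + commutator c z (commutator c x y) = 0"
    by (simp add: comm_eq amul_diff1 amul_diff2 assoc[OF U] algebra_simps)
  then show "(\<lambda>i. commutator c x (commutator c y z) i + commutator c y (commutator c z x) i + commutator c z (commutator c x y) i) = (\<lambda>i. 0)"
    by (simp add: fun_eq_iff)
next
  fix s :: 'k and x y :: "'n \<Rightarrow> 'k"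
  show "commutator c (\<lambda>i. s * x i) y = (\<lambda>i. s * commutator c x y i)"
    by (simp add: commutator_def amul_def fun_eq_iff sum_distrib_left algebra_simps)
  show "commutator c y (\<lambda>i. s * x i) = (\<lambda>i. s * commutator c y x i)"
    by (simp add: commutator_def amul_def fun_eq_iff sum_distrib_left algebra_simps)
qed

lemma main_generic:
  fixes c :: "'n::finite \<Rightarrow> 'n \<Rightarrow> 'n \<Rightarrow> 'k::field_char_0"
  assumes "unital_assoc_algebra c u \<and> quadratic_poisson P \<and> poisson_compatible c P"
  shows "lie_bialgebra (commutator c) (cocomm P u)"
proof -
  have U: "unital_assoc_algebra c u" and Q: "quadratic_poisson P" and C: "poisson_compatible c P"
    using assms by auto
  show ?thesis
    unfolding lie_bialgebra_def
  proof (intro conjI allI)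
    show "lie_bracket (commutator c)" by (rule comm_lie[OF U])
    show "lie_bracket (dual_bracket (cocomm P u))" by (rule dual_lie[OF U C Q])
  next
    fix x y :: "'n \<Rightarrow> 'k"
    show "cocomm P u (\<lambda>i. x i + y i) = (\<lambda>i j. cocomm P u x i j + cocomm P u y i j)"
      by (simp add: cocomm_def pdelta_def fun_eq_iff algebra_simps sum.distrib)
    show "cocomm P u (commutator c x y) = (\<lambda>i j. ad2 (commutator c) x (cocomm P u y) i j - ad2 (commutator c) y (cocomm P u x) i j)"
      by (rule cocycle[OF U C])
  next
    fix s :: 'k and x :: "'n \<Rightarrow> 'k"
    show "cocomm P u (\<lambda>i. s * x i) = (\<lambda>i j. s * cocomm P u x i j)"
      by (simp add: cocomm_def pdelta_def fun_eq_iff sum_distrib_left algebra_simps)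
  next
    fix x :: "'n \<Rightarrow> 'k" and i j
    show "cocomm P u x i j = - cocomm P u x j i" by (rule cocomm_skew[OF Q])
  qed
qed

theorem lemma3:
  shows "(\<forall>(c :: 'n::finite \<Rightarrow> 'n \<Rightarrow> 'n \<Rightarrow> real) u P.
            unital_assoc_algebra c u \<and> quadratic_poisson P \<and> poisson_compatible c P
            \<longrightarrow> lie_bialgebra (commutator c) (cocomm P u))
       \<and> (\<forall>(c :: 'n \<Rightarrow> 'n \<Rightarrow> 'n \<Rightarrow> complex) u P.
            unital_assoc_algebra c u \<and> quadratic_poisson P \<and> poisson_compatible c P
            \<longrightarrow> lie_bialgebra (commutator c) (cocomm P u))"
  by (intro conjI allI impI; erule main_generic)

end
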